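(* Assume the standing hypotheses below. For each $n<\omega$ let $X_n$ be a fixed basis of $G_n$, let $\mathcal{B}_n$ be the family of all subgroups of $G_n$ generated by subsets of $X_n$, and let $\mathcal{B}'_n = \{ A \in \mathcal{B}_n : A + G_i \text{ is pure in } G \text{ for every } i<\omega\}$. Then the collection $$\mathcal{B} = \{ A \le G : A \cap G_n \in \mathcal{B}'_n \text{ for every } n < \omega \}$$ is a $G(\aleph_0)$-family of $G$ consisting of pure subgroups of $G$.
   Context: Standing hypotheses: $G$ is a torsion-free abelian group and $0 = G_0 < G_1 < \dots < G_n < \dots$ ($n<\omega$) is an ascending chain of subgroups of $G$ such that every $G_n$ is free, every $G_n$ is a pure subgroup of $G$, and $G = \bigcup_{n<\omega} G_n$. A subgroup $H$ of an abelian group $G$ is pure if solubility in $G$ of every equation $nx = h$ with $n\in\mathbb{Z}$, $h\in H$ implies its solubility in $H$. A $G(\aleph_0)$-family of an abelian group $M$ is a collection $\mathcal{C}$ of subgroups of $M$ such that: (i) $0 \in \mathcal{C}$ and $M \in \mathcal{C}$; (ii) $\mathcal{C}$ is closed under unions of ascending chains; (iii) for every $A_0 \in \mathcal{C}$ and every countable subset $H \subseteq M$ there exists $A \in \mathcal{C}$ with $A_0 \cup H \subseteq A$ and $A/A_0$ countable. *)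

theory Defs
  imports Main "HOL-Library.Countable_Set"
begin

text \<open>Abelian groups are rendered as subsets of an ambient type of class ab_group_add.\<close>

definition is_subgroup :: "'a::ab_group_add set \<Rightarrow> bool" where
  "is_subgroup H \<longleftrightarrow> 0 \<in> H \<and> (\<forall>x\<in>H. \<forall>y\<in>H. x + y \<in> H) \<and> (\<forall>x\<in>H. - x \<in> H)"

definition subgroup_of :: "'a::ab_group_add set \<Rightarrow> 'a set \<Rightarrow> bool" where
  "subgroup_of H G \<longleftrightarrow> is_subgroup H \<and> H \<subseteq> G"

definition natmul :: "nat \<Rightarrow> 'a::ab_group_add \<Rightarrow> 'a" where
  "natmul n x = ((\<lambda>y. y + x) ^^ n) 0"

definition zmul :: "int \<Rightarrow> 'a::ab_group_add \<Rightarrow> 'a" where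
  "zmul k x = (if 0 \<le> k then natmul (nat k) x else - natmul (nat (- k)) x)"

definition torsion_free :: "'a::ab_group_add set \<Rightarrow> bool" where
  "torsion_free G \<longleftrightarrow> (\<forall>x\<in>G. \<forall>n::int. n \<noteq> 0 \<longrightarrow> zmul n x = 0 \<longrightarrow> x = 0)"

definition pure_in :: "'a::ab_group_add set \<Rightarrow> 'a set \<Rightarrow> bool" where
  "pure_in H G \<longleftrightarrow> subgroup_of H G \<and>
     (\<forall>n::int. \<forall>h\<in>H. (\<exists>x\<in>G. zmul n x = h) \<longrightarrow> (\<exists>y\<in>H. zmul n y = h))"

definition gen :: "'a::ab_group_add set \<Rightarrow> 'a set" where
  "gen S = \<Inter>{H. is_subgroup H \<and> S \<subseteq> H}"

definition zindep :: "'a::ab_group_add set \<Rightarrow> bool" where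
  "zindep X \<longleftrightarrow> (\<forall>F c. finite F \<longrightarrow> F \<subseteq> X \<longrightarrow> (\<Sum>x\<in>F. zmul (c x) x) = 0 \<longrightarrow> (\<forall>x\<in>F. c x = 0))"

definition is_basis :: "'a::ab_group_add set \<Rightarrow> 'a set \<Rightarrow> bool" where
  "is_basis X H \<longleftrightarrow> X \<subseteq> H \<and> gen X = H \<and> zindep X"

definition free_group :: "'a::ab_group_add set \<Rightarrow> bool" where
  "free_group H \<longleftrightarrow> is_subgroup H \<and> (\<exists>X. is_basis X H)"

definition set_plus_grp :: "'a::ab_group_add set \<Rightarrow> 'a set \<Rightarrow> 'a set" where
  "set_plus_grp A B = {a + b | a b. a \<in> A \<and> b \<in> B}"

definition coset :: "'a::ab_group_add \<Rightarrow> 'a set \<Rightarrow> 'a set" where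
  "coset a A = {a + b | b. b \<in> A}"

text \<open>A/A0 countable: the set of cosets of A0 met by A is countable.\<close>
definition quotient_countable :: "'a::ab_group_add set \<Rightarrow> 'a set \<Rightarrow> bool" where
  "quotient_countable A A0 \<longleftrightarrow> countable ((\<lambda>a. coset a A0) ` A)"

definition G_aleph0_family :: "'a::ab_group_add set set \<Rightarrow> 'a set \<Rightarrow> bool" where
  "G_aleph0_family C M \<longleftrightarrow>
     (\<forall>A\<in>C. subgroup_of A M) \<and>
     {0} \<in> C \<and> M \<in> C \<and>
     (\<forall>K. K \<subseteq> C \<longrightarrow> K \<noteq> {} \<longrightarrow> Complete_Partial_Order.chain (\<subseteq>) K \<longrightarrow> \<Union>K \<in> C) \<and>
     (\<forall>A0\<in>C. \<forall>H. H \<subseteq> M \<longrightarrow> countable H \<longrightarrow>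
        (\<exists>A\<in>C. A0 \<union> H \<subseteq> A \<and> quotient_countable A A0))"

definition famB :: "(nat \<Rightarrow> 'a::ab_group_add set) \<Rightarrow> nat \<Rightarrow> 'a set set" where
  "famB X n = {gen S | S. S \<subseteq> X n}"

definition famB' :: "'a::ab_group_add set \<Rightarrow> (nat \<Rightarrow> 'a set) \<Rightarrow> (nat \<Rightarrow> 'a set) \<Rightarrow> nat \<Rightarrow> 'a set set" where
  "famB' G Gs X n = {A \<in> famB X n. \<forall>i. pure_in (set_plus_grp A (Gs i)) G}"

definition famBB :: "'a::ab_group_add set \<Rightarrow> (nat \<Rightarrow> 'a set) \<Rightarrow> (nat \<Rightarrow> 'a set) \<Rightarrow> 'a set set" where
  "famBB G Gs X = {A. subgroup_of A G \<and> (\<forall>n. A \<inter> Gs n \<in> famB' G Gs X n)}"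

end

theory Submission
  imports Defs
begin

lemma subg_0: "is_subgroup H \<Longrightarrow> 0 \<in> H" by (simp add: is_subgroup_def)
lemma subg_add: "is_subgroup H \<Longrightarrow> x \<in> H \<Longrightarrow> y \<in> H \<Longrightarrow> x + y \<in> H" by (simp add: is_subgroup_def)
lemma subg_neg: "is_subgroup H \<Longrightarrow> x \<in> H \<Longrightarrow> - x \<in> H" by (simp add: is_subgroup_def)
lemma subg_diff: "is_subgroup H \<Longrightarrow> x \<in> H \<Longrightarrow> y \<in> H \<Longrightarrow> x - y \<in> H"
  using subg_add subg_neg by (metis diff_conv_add_uminus)
lemma subg_Int: "is_subgroup A \<Longrightarrow> is_subgroup B \<Longrightarrow> is_subgroup (A \<inter> B)"
  by (simp add: is_subgroup_def)

lemma gen_subgroup: "is_subgroup (gen S)" unfolding gen_def is_subgroup_def by auto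
lemma gen_sub: "S \<subseteq> gen S" unfolding gen_def by auto
lemma gen_least: "is_subgroup H \<Longrightarrow> S \<subseteq> H \<Longrightarrow> gen S \<subseteq> H" unfolding gen_def by auto
lemma gen_mono: "S \<subseteq> T \<Longrightarrow> gen S \<subseteq> gen T" unfolding gen_def by auto

lemma sum_list_uminus: "sum_list (map uminus l) = - sum_list (l::'a::ab_group_add list)"
  by (induct l) (simp_all add: algebra_simps)

lemma gen_countable: assumes "countable S" shows "countable (gen S)"
proof -
  let ?T = "sum_list ` lists (S \<union> uminus ` S)"
  have "is_subgroup ?T"
    unfolding is_subgroup_def
  proof (intro conjI ballI)
    show "0 \<in> ?T" by (rule image_eqI[of _ _ "[]"]) auto
  next
    fix x y assume "x \<in> ?T" "y \<in> ?T"
    then obtain l1 l2 where "l1 \<in> lists (S \<union> uminus ` S)" "x = sum_list l1"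
      "l2 \<in> lists (S \<union> uminus ` S)" "y = sum_list l2" by auto
    then show "x + y \<in> ?T" by (intro image_eqI[of _ _ "l1 @ l2"]) auto
  next
    fix x assume "x \<in> ?T"
    then obtain l where l: "l \<in> lists (S \<union> uminus ` S)" "x = sum_list l" by auto
    have "map uminus l \<in> lists (S \<union> uminus ` S)" 
    proof -
      have "\<forall>z\<in>set l. - z \<in> S \<union> uminus ` S"
      proof
        fix z assume "z \<in> set l"
        then have "z \<in> S \<or> z \<in> uminus ` S" using l(1) by (simp add: in_lists_conv_set)
        then show "- z \<in> S \<union> uminus ` S"
        proof
          assume "z \<in> S" then show ?thesis by blast
        next
          assume "z \<in> uminus ` S" then obtain s where "s \<in> S" "z = - s" by blast
          then show ?thesis by simp
        qed
      qed
      then show ?thesis by (simp add: in_lists_conv_set)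
    qed
    then show "- x \<in> ?T" using l(2) by (intro image_eqI[of _ _ "map uminus l"]) (simp_all add: sum_list_uminus)
  qed
  moreover have "S \<subseteq> ?T"
  proof
    fix s assume "s \<in> S" then show "s \<in> ?T" by (intro image_eqI[of _ _ "[s]"]) auto
  qed
  ultimately have "gen S \<subseteq> ?T" by (rule gen_least)
  moreover have "countable ?T" using assms by auto
  ultimately show ?thesis using countable_subset by blast
qed

lemma gen_fin: assumes "y \<in> gen X" shows "\<exists>F. finite F \<and> F \<subseteq> X \<and> y \<in> gen F"
proof -
  let ?U = "{y. \<exists>F. finite F \<and> F \<subseteq> X \<and> y \<in> gen F}"
  have "is_subgroup ?U"
    unfolding is_subgroup_def
  proof (intro conjI ballI)
    show "0 \<in> ?U" using subg_0[OF gen_subgroup] by blast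
  next
    fix x y assume "x \<in> ?U" "y \<in> ?U"
    then obtain F1 F2 where F: "finite F1" "F1 \<subseteq> X" "x \<in> gen F1" "finite F2" "F2 \<subseteq> X" "y \<in> gen F2" by auto
    have "x \<in> gen (F1 \<union> F2)" "y \<in> gen (F1 \<union> F2)" using F gen_mono[of F1 "F1 \<union> F2"] gen_mono[of F2 "F1 \<union> F2"] by auto
    then have "x + y \<in> gen (F1 \<union> F2)" by (rule subg_add[OF gen_subgroup])
    then show "x + y \<in> ?U" using F by blast
  next
    fix x assume "x \<in> ?U"
    then obtain F where F: "finite F" "F \<subseteq> X" "x \<in> gen F" by auto
    have "- x \<in> gen F" by (rule subg_neg[OF gen_subgroup F(3)])
    then show "- x \<in> ?U" using F by blast
  qed
  moreover have "X \<subseteq> ?U"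
  proof
    fix x assume "x \<in> X" then show "x \<in> ?U" using gen_sub[of "{x}"] by (intro CollectI exI[of _ "{x}"]) auto
  qed
  ultimately show ?thesis using gen_least assms by blast
qed

lemma natmul_0: "natmul 0 x = 0" by (simp add: natmul_def)
lemma natmul_Suc: "natmul (Suc n) x = natmul n x + x" by (simp add: natmul_def)
lemma natmul_add: "natmul n (x + y) = natmul n x + natmul n y"
proof (induct n)
  case 0 then show ?case by (simp add: natmul_0)
next
  case (Suc n) then show ?case by (simp only: natmul_Suc) (simp add: add.assoc add.left_commute)
qed
lemma natmul_neg: "natmul n (- x) = - natmul n x"
proof (induct n)
  case 0 then show ?case by (simp add: natmul_0)
next
  case (Suc n) then show ?case by (simp only: natmul_Suc) (simp add: add.commute)
qed
lemma zmul_add: "zmul m (x + y) = zmul m x + zmul m y"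
  unfolding zmul_def by (simp only: natmul_add minus_add_distrib split: if_split) simp
lemma zmul_neg: "zmul m (- x) = - zmul m x"
  unfolding zmul_def by (simp only: natmul_neg split: if_split) simp
lemma zmul_diff: "zmul m (x - y) = zmul m x - zmul m y"
  by (simp only: diff_conv_add_uminus zmul_add zmul_neg)

lemma splus_subgroup: assumes "is_subgroup A" "is_subgroup B" shows "is_subgroup (set_plus_grp A B)"
  unfolding is_subgroup_def set_plus_grp_def
proof (intro conjI ballI)
  show "0 \<in> {a + b |a b. a \<in> A \<and> b \<in> B}" using assms subg_0 by force
next
  fix x y assume "x \<in> {a + b |a b. a \<in> A \<and> b \<in> B}" "y \<in> {a + b |a b. a \<in> A \<and> b \<in> B}"
  then obtain a b a' b' where "x = a + b" "y = a' + b'" "a \<in> A" "b \<in> B" "a' \<in> A" "b' \<in> B" by auto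
  then show "x + y \<in> {a + b |a b. a \<in> A \<and> b \<in> B}" using assms subg_add
    by (intro CollectI exI[of _ "a + a'"] exI[of _ "b + b'"]) (auto simp: algebra_simps)
next
  fix x assume "x \<in> {a + b |a b. a \<in> A \<and> b \<in> B}"
  then obtain a b where "x = a + b" "a \<in> A" "b \<in> B" by auto
  then show "- x \<in> {a + b |a b. a \<in> A \<and> b \<in> B}" using assms subg_neg
    by (intro CollectI exI[of _ "- a"] exI[of _ "- b"]) (auto simp: algebra_simps)
qed

lemma splus_mem: "a \<in> A \<Longrightarrow> b \<in> B \<Longrightarrow> a + b \<in> set_plus_grp A B"
  unfolding set_plus_grp_def by blast

lemma subgroup_Union_chain:
  assumes "Complete_Partial_Order.chain (\<subseteq>) K" "\<forall>A\<in>K. is_subgroup A" "K \<noteq> {}"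
  shows "is_subgroup (\<Union>K)"
  unfolding is_subgroup_def
proof (intro conjI ballI)
  show "0 \<in> \<Union>K" using assms subg_0 by blast
next
  fix x y assume "x \<in> \<Union>K" "y \<in> \<Union>K"
  then obtain A B where AB: "A \<in> K" "B \<in> K" "x \<in> A" "y \<in> B" by auto
  from chainD[OF assms(1) AB(1,2)] have "A \<subseteq> B \<or> B \<subseteq> A" .
  then show "x + y \<in> \<Union>K" using AB assms(2) subg_add by blast
next
  fix x assume "x \<in> \<Union>K" then show "- x \<in> \<Union>K" using assms(2) subg_neg by blast
qed

lemma pure_Union_chain:
  assumes "Complete_Partial_Order.chain (\<subseteq>) K" "\<forall>A\<in>K. pure_in A G" "K \<noteq> {}"
  shows "pure_in (\<Union>K) G"
proof -
  have "is_subgroup (\<Union>K)" using assms subgroup_Union_chain[OF assms(1)]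
    by (simp add: pure_in_def subgroup_of_def)
  moreover have "\<Union>K \<subseteq> G" using assms(2) by (auto simp: pure_in_def subgroup_of_def)
  moreover have "\<forall>n::int. \<forall>h\<in>\<Union>K. (\<exists>x\<in>G. zmul n x = h) \<longrightarrow> (\<exists>y\<in>\<Union>K. zmul n y = h)"
  proof (intro allI ballI impI)
    fix n :: int and h assume "h \<in> \<Union>K" "\<exists>x\<in>G. zmul n x = h"
    then obtain A where "A \<in> K" "h \<in> A" by auto
    then have "pure_in A G" using assms(2) by blast
    then have "\<exists>y\<in>A. zmul n y = h" using \<open>h \<in> A\<close> \<open>\<exists>x\<in>G. zmul n x = h\<close>
      unfolding pure_in_def by blast
    then show "\<exists>y\<in>\<Union>K. zmul n y = h" using \<open>A \<in> K\<close> by blast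
  qed
  ultimately show ?thesis unfolding pure_in_def subgroup_of_def by blast
qed

lemma chain_range_mono: assumes m: "mono (F :: nat \<Rightarrow> 'b set)" shows "Complete_Partial_Order.chain (\<subseteq>) (range F)"
proof (rule chainI)
  fix A B assume "A \<in> range F" "B \<in> range F"
  then obtain i j where ij: "A = F i" "B = F j" by blast
  show "A \<subseteq> B \<or> B \<subseteq> A"
  proof (cases "i \<le> j")
    case True then have "F i \<subseteq> F j" using m by (simp add: mono_def)
    then show ?thesis using ij by simp
  next
    case False then have "F j \<subseteq> F i" using m by (simp add: mono_def)
    then show ?thesis using ij by simp
  qed
qed


lemma famB_D: assumes "B \<in> famB X n" shows "B \<subseteq> gen (B \<inter> X n)"
proof -
  obtain S where S: "B = gen S" "S \<subseteq> X n" using assms unfolding famB_def by blast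
  have "S \<subseteq> B \<inter> X n" using S gen_sub by blast
  then show ?thesis using S(1) gen_mono by blast
qed

lemma famB_I: assumes "is_subgroup B" "B \<subseteq> gen (B \<inter> X n)" shows "B \<in> famB X n"
proof -
  have "gen (B \<inter> X n) \<subseteq> B" using gen_least[OF assms(1)] by blast
  then have "B = gen (B \<inter> X n)" using assms(2) by blast
  then show ?thesis unfolding famB_def by blast
qed

lemma splus_absorb1: assumes "is_subgroup B" "A \<subseteq> B" "0 \<in> A" shows "set_plus_grp A B = B"
proof
  show "set_plus_grp A B \<subseteq> B" unfolding set_plus_grp_def using assms subg_add by blast
  show "B \<subseteq> set_plus_grp A B"
  proof
    fix b assume "b \<in> B" then show "b \<in> set_plus_grp A B" using splus_mem[OF assms(3), of b B] by simp
  qed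
qed

lemma splus_absorb2: assumes "is_subgroup B" "A \<subseteq> B" "0 \<in> A" shows "set_plus_grp B A = B"
proof
  show "set_plus_grp B A \<subseteq> B" unfolding set_plus_grp_def using assms subg_add by blast
  show "B \<subseteq> set_plus_grp B A"
  proof
    fix b assume "b \<in> B" then show "b \<in> set_plus_grp B A" using splus_mem[OF _ assms(3), of b B] by simp
  qed
qed

lemma coset_shift: assumes "is_subgroup A0" "a0 \<in> A0" shows "coset (a0 + c) A0 = coset c A0"
proof
  show "coset (a0 + c) A0 \<subseteq> coset c A0"
  proof
    fix z assume "z \<in> coset (a0 + c) A0"
    then obtain b where b: "b \<in> A0" "z = a0 + c + b" unfolding coset_def by blast
    have "a0 + b \<in> A0" using subg_add[OF assms(1) assms(2) b(1)] .
    moreover have "z = c + (a0 + b)" using b(2) by (simp add: algebra_simps)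
    ultimately show "z \<in> coset c A0" unfolding coset_def by blast
  qed
  show "coset c A0 \<subseteq> coset (a0 + c) A0"
  proof
    fix z assume "z \<in> coset c A0"
    then obtain b where b: "b \<in> A0" "z = c + b" unfolding coset_def by blast
    have "b - a0 \<in> A0" using subg_diff[OF assms(1) b(1) assms(2)] .
    moreover have "z = a0 + c + (b - a0)" using b(2) by (simp add: algebra_simps)
    ultimately show "z \<in> coset (a0 + c) A0" unfolding coset_def by blast
  qed
qed

lemma extension:
  fixes G :: "'a::ab_group_add set" and Gs X :: "nat \<Rightarrow> 'a set"
  assumes Gsg: "is_subgroup G"
    and GS: "\<And>n. is_subgroup (Gs n)" "\<And>n. Gs n \<subseteq> G"
    and Gle: "\<And>i j. i \<le> j \<Longrightarrow> Gs i \<subseteq> Gs j"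
    and Gpure: "\<And>n. pure_in (Gs n) G"
    and genX: "\<And>n. gen (X n) = Gs n"
    and Xsub: "\<And>n. X n \<subseteq> Gs n"
    and A0: "A0 \<in> famBB G Gs X"
    and H: "H \<subseteq> G" "countable H"
  shows "\<exists>A\<in>famBB G Gs X. A0 \<union> H \<subseteq> A \<and> quotient_countable A A0"
proof -
  have A0sg: "is_subgroup A0" and A0G: "A0 \<subseteq> G" and A0n: "\<And>n. A0 \<inter> Gs n \<in> famB' G Gs X n"
    using A0 unfolding famBB_def subgroup_of_def by auto
  define supp where "supp n y = (SOME F. finite F \<and> F \<subseteq> X n \<and> y \<in> gen F)" for n y
  define rep where "rep n c = (SOME a. a \<in> A0 \<and> a + c \<in> Gs n)" for n c
  define P where "P n i m c x \<longleftrightarrow> x \<in> Gs n \<and> (\<exists>a\<in>A0. \<exists>g\<in>Gs i. a + c \<in> Gs n \<and> zmul m x = a + c + g)"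
    for n i and m :: int and c x
  define wit where "wit n i m c = (SOME x. P n i m c x)" for n i m c
  define S1 where "S1 C = (\<Union>n. \<Union>c\<in>gen C. if (\<exists>a\<in>A0. a + c \<in> Gs n) then supp n (rep n c + c) else {})" for C
  define S2 where "S2 C = (\<Union>n. \<Union>i. \<Union>m. \<Union>c\<in>gen C. if (\<exists>x. P n i m c x) then {wit n i m c} else {})" for C
  define step where "step C = C \<union> S1 C \<union> S2 C" for C
  define Cs where "Cs k = (step ^^ k) H" for k
  define C where "C = (\<Union>k. Cs k)"
  define A where "A = set_plus_grp A0 (gen C)"

  have supp_prop: "finite (supp n y) \<and> supp n y \<subseteq> X n \<and> y \<in> gen (supp n y)" if "y \<in> Gs n" for n y
  proof -
    have "\<exists>F. finite F \<and> F \<subseteq> X n \<and> y \<in> gen F" using gen_fin[of y "X n"] that genX by simp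
    then show ?thesis unfolding supp_def by (rule someI_ex)
  qed
  have rep_prop: "rep n c \<in> A0 \<and> rep n c + c \<in> Gs n" if "\<exists>a\<in>A0. a + c \<in> Gs n" for n c
  proof -
    have "\<exists>a. a \<in> A0 \<and> a + c \<in> Gs n" using that by blast
    then show ?thesis unfolding rep_def by (rule someI_ex)
  qed
  have wit_prop: "P n i m c (wit n i m c)" if "\<exists>x. P n i m c x" for n i m c
    using that unfolding wit_def by (rule someI_ex)

  have S1_c: "countable (S1 D) \<and> S1 D \<subseteq> G" if "countable D" for D
  proof -
    have "countable (gen D)" using gen_countable[OF that] .
    have each: "countable (if (\<exists>a\<in>A0. a + c \<in> Gs n) then supp n (rep n c + c) else {}) \<and>
       (if (\<exists>a\<in>A0. a + c \<in> Gs n) then supp n (rep n c + c) else {}) \<subseteq> G" for n c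
    proof (cases "\<exists>a\<in>A0. a + c \<in> Gs n")
      case True
      then have "finite (supp n (rep n c + c)) \<and> supp n (rep n c + c) \<subseteq> X n"
        using supp_prop rep_prop by blast
      then show ?thesis using True Xsub[of n] GS(2)[of n] by (auto intro: countable_finite)
    qed simp
    have "countable (S1 D)" unfolding S1_def
      apply (rule countable_UN[OF countableI_type])
      apply (rule countable_UN[OF \<open>countable (gen D)\<close>])
      using each by blast
    moreover have "S1 D \<subseteq> G" unfolding S1_def
      by (intro UN_least) (use each in blast)
    ultimately show ?thesis by blast
  qed
  have S2_c: "countable (S2 D) \<and> S2 D \<subseteq> G" if "countable D" for D
  proof -
    have "countable (gen D)" using gen_countable[OF that] .
    have each: "countable (if (\<exists>x. P n i m c x) then {wit n i m c} else {}) \<and>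
       (if (\<exists>x. P n i m c x) then {wit n i m c} else {}) \<subseteq> G" for n i m c
    proof (cases "\<exists>x. P n i m c x")
      case True
      then have "wit n i m c \<in> Gs n" using wit_prop unfolding P_def by blast
      then show ?thesis using True GS(2)[of n] by auto
    qed simp
    have "countable (S2 D)" unfolding S2_def
      apply (rule countable_UN[OF countableI_type])
      apply (rule countable_UN[OF countableI_type])
      apply (rule countable_UN[OF countableI_type])
      apply (rule countable_UN[OF \<open>countable (gen D)\<close>])
      using each by blast
    moreover have "S2 D \<subseteq> G" unfolding S2_def
      by (intro UN_least) (use each in blast)
    ultimately show ?thesis by blast
  qed
  have Cs_Suc: "Cs (Suc k) = step (Cs k)" for k unfolding Cs_def by simp
  have Cs_prop: "countable (Cs k) \<and> Cs k \<subseteq> G" for k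
  proof (induct k)
    case 0 then show ?case using H unfolding Cs_def by simp
  next
    case (Suc k)
    then have "countable (S1 (Cs k)) \<and> S1 (Cs k) \<subseteq> G" "countable (S2 (Cs k)) \<and> S2 (Cs k) \<subseteq> G"
      using S1_c S2_c by simp_all
    then show ?case unfolding Cs_Suc step_def using Suc by simp
  qed
  have Cs_mono: "mono Cs" unfolding mono_iff_le_Suc Cs_Suc step_def by blast
  have S1_sub: "S1 (Cs k) \<subseteq> C" for k
    using Cs_Suc[of k] unfolding C_def step_def by blast
  have S2_sub: "S2 (Cs k) \<subseteq> C" for k
    using Cs_Suc[of k] unfolding C_def step_def by blast
  have C_c: "countable C" unfolding C_def using Cs_prop by blast
  have C_G: "C \<subseteq> G" unfolding C_def using Cs_prop by blast
  have HC: "H \<subseteq> C" unfolding C_def using Cs_def[of 0] by auto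
  have genC: "\<exists>k. c \<in> gen (Cs k)" if "c \<in> gen C" for c
  proof -
    have mg: "mono (\<lambda>k. gen (Cs k))" using Cs_mono gen_mono unfolding mono_def by blast
    have "is_subgroup (\<Union>(range (\<lambda>k. gen (Cs k))))"
      using subgroup_Union_chain[OF chain_range_mono[OF mg]] gen_subgroup by blast
    moreover have "C \<subseteq> \<Union>(range (\<lambda>k. gen (Cs k)))" unfolding C_def using gen_sub by blast
    ultimately have "gen C \<subseteq> \<Union>(range (\<lambda>k. gen (Cs k)))" by (rule gen_least)
    then show ?thesis using that by blast
  qed
  have gCsg: "is_subgroup (gen C)" by (rule gen_subgroup)
  have gCG: "gen C \<subseteq> G" using gen_least[OF Gsg C_G] .
  have A_mem: "a + c \<in> A" if "a \<in> A0" "c \<in> gen C" for a c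
    unfolding A_def using splus_mem[OF that] .
  have CA: "C \<subseteq> A"
  proof
    fix c assume "c \<in> C" then have "c \<in> gen C" using gen_sub by blast
    then show "c \<in> A" using A_mem[OF subg_0[OF A0sg]] by simp
  qed
  have A0A: "A0 \<subseteq> A"
  proof
    fix a assume "a \<in> A0" then show "a \<in> A" using A_mem[OF _ subg_0[OF gCsg]] by simp
  qed
  have Asg: "is_subgroup A" unfolding A_def by (rule splus_subgroup[OF A0sg gCsg])
  have AG: "A \<subseteq> G"
  proof
    fix z assume "z \<in> A"
    then obtain a c where "z = a + c" "a \<in> A0" "c \<in> gen C" unfolding A_def set_plus_grp_def by blast
    then show "z \<in> G" using A0G gCG subg_add[OF Gsg] by blast
  qed
  have qc: "quotient_countable A A0"
  proof -
    have "(\<lambda>a. coset a A0) ` A \<subseteq> (\<lambda>c. coset c A0) ` gen C"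
    proof
      fix w assume "w \<in> (\<lambda>a. coset a A0) ` A"
      then obtain z where z: "z \<in> A" "w = coset z A0" by blast
      then obtain a c where "z = a + c" "a \<in> A0" "c \<in> gen C" unfolding A_def set_plus_grp_def by blast
      then have "w = coset c A0" using z(2) coset_shift[OF A0sg] by simp
      then show "w \<in> (\<lambda>c. coset c A0) ` gen C" using \<open>c \<in> gen C\<close> by blast
    qed
    moreover have "countable ((\<lambda>c. coset c A0) ` gen C)" using gen_countable[OF C_c] by blast
    ultimately show ?thesis unfolding quotient_countable_def using countable_subset by blast
  qed

  have famB_part: "A \<inter> Gs n \<subseteq> gen (A \<inter> Gs n \<inter> X n)" for n
  proof
    fix z assume z: "z \<in> A \<inter> Gs n"
    then obtain a c where ac: "z = a + c" "a \<in> A0" "c \<in> gen C" unfolding A_def set_plus_grp_def by blast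
    obtain k where k: "c \<in> gen (Cs k)" using genC ac(3) by blast
    have ex: "\<exists>a\<in>A0. a + c \<in> Gs n" using ac z by blast
    define a' where "a' = rep n c"
    have ra: "a' \<in> A0" "a' + c \<in> Gs n" using rep_prop[OF ex] unfolding a'_def by auto
    define F where "F = supp n (a' + c)"
    have F: "finite F" "F \<subseteq> X n" "a' + c \<in> gen F" using supp_prop[OF ra(2)] unfolding F_def by auto
    have "(if (\<exists>a\<in>A0. a + c \<in> Gs n) then supp n (rep n c + c) else {}) \<subseteq> S1 (Cs k)"
      unfolding S1_def using k by blast
    then have "F \<subseteq> S1 (Cs k)" using ex unfolding F_def a'_def by simp
    then have "F \<subseteq> A \<inter> Gs n \<inter> X n" using S1_sub[of k] CA F(2) Xsub[of n] by blast
    then have 1: "a' + c \<in> gen (A \<inter> Gs n \<inter> X n)" using F(3) gen_mono by blast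
    have "a - a' \<in> Gs n" using subg_diff[OF GS(1) _ ra(2), of "a + c"] z ac(1) by simp
    moreover have "a - a' \<in> A0" using subg_diff[OF A0sg ac(2) ra(1)] .
    ultimately have "a - a' \<in> A0 \<inter> Gs n" by blast
    moreover have "A0 \<inter> Gs n \<in> famB X n" using A0n[of n] unfolding famB'_def by blast
    ultimately have "a - a' \<in> gen (A0 \<inter> Gs n \<inter> X n)" using famB_D[of "A0 \<inter> Gs n" X n] by blast
    moreover have "A0 \<inter> Gs n \<inter> X n \<subseteq> A \<inter> Gs n \<inter> X n" using A0A by blast
    ultimately have 2: "a - a' \<in> gen (A \<inter> Gs n \<inter> X n)" using gen_mono[of "A0 \<inter> Gs n \<inter> X n" "A \<inter> Gs n \<inter> X n"] by blast
    have "z = (a' + c) + (a - a')" using ac(1) by (simp add: algebra_simps)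
    then show "z \<in> gen (A \<inter> Gs n \<inter> X n)" using subg_add[OF gen_subgroup 1 2] by simp
  qed

  have pure_part: "pure_in (set_plus_grp (A \<inter> Gs n) (Gs i)) G" for n i
  proof (cases "n \<le> i")
    case True
    have "set_plus_grp (A \<inter> Gs n) (Gs i) = Gs i"
    proof (rule splus_absorb1[OF GS(1)])
      show "A \<inter> Gs n \<subseteq> Gs i" using Gle[OF True] by blast
      show "0 \<in> A \<inter> Gs n" using subg_0[OF Asg] subg_0[OF GS(1)] by blast
    qed
    then show ?thesis using Gpure by simp
  next
    case False
    then have Gin: "Gs i \<subseteq> Gs n" using Gle[of i n] by simp
    define D where "D = set_plus_grp (A \<inter> Gs n) (Gs i)"
    define D0 where "D0 = set_plus_grp (A0 \<inter> Gs n) (Gs i)"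
    have Dsg: "is_subgroup D" unfolding D_def
      by (rule splus_subgroup[OF subg_Int[OF Asg GS(1)] GS(1)])
    have DGn: "D \<subseteq> Gs n"
    proof
      fix h assume "h \<in> D"
      then obtain z g where "h = z + g" "z \<in> Gs n" "g \<in> Gs i" unfolding D_def set_plus_grp_def by blast
      then show "h \<in> Gs n" using Gin subg_add[OF GS(1)] by blast
    qed
    have DG: "D \<subseteq> G" using DGn GS(2) by blast
    have D0pure: "pure_in D0 G" using A0n[of n] unfolding famB'_def D0_def by blast
    have D0D: "D0 \<subseteq> D" unfolding D0_def D_def set_plus_grp_def using A0A by blast
    have div: "\<exists>y\<in>D. zmul m y = h" if h: "h \<in> D" "\<exists>x\<in>G. zmul m x = h" for m h
    proof -
      obtain z g where zg: "h = z + g" "z \<in> A \<inter> Gs n" "g \<in> Gs i" using h(1) unfolding D_def set_plus_grp_def by blast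
      obtain a c where ac: "z = a + c" "a \<in> A0" "c \<in> gen C" using zg(2) unfolding A_def set_plus_grp_def by blast
      obtain k where k: "c \<in> gen (Cs k)" using genC ac(3) by blast
      have "h \<in> Gs n" using DGn h(1) by blast
      then obtain x1 where x1: "x1 \<in> Gs n" "zmul m x1 = h" using Gpure[of n] h(2) unfolding pure_in_def by blast
      have "P n i m c x1" unfolding P_def using x1 zg ac by auto
      then have exP: "\<exists>x. P n i m c x" by blast
      define x where "x = wit n i m c"
      have "P n i m c x" unfolding x_def by (rule wit_prop[OF exP])
      then obtain a' g' where xp: "x \<in> Gs n" "a' \<in> A0" "g' \<in> Gs i" "a' + c \<in> Gs n" "zmul m x = a' + c + g'"
        unfolding P_def by blast
      have "(if (\<exists>x. P n i m c x) then {wit n i m c} else {}) \<subseteq> S2 (Cs k)"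
        unfolding S2_def using k by blast
      then have "x \<in> S2 (Cs k)" using exP unfolding x_def by simp
      then have "x \<in> A" using S2_sub CA by blast
      then have "x + 0 \<in> D" unfolding D_def using xp(1) subg_0[OF GS(1)] splus_mem by blast
      then have xD: "x \<in> D" by simp
      have "a - a' \<in> Gs n" using subg_diff[OF GS(1) _ xp(4), of "a + c"] zg(2) ac(1) by simp
      moreover have "a - a' \<in> A0" using subg_diff[OF A0sg ac(2) xp(2)] .
      moreover have "g - g' \<in> Gs i" using subg_diff[OF GS(1) zg(3) xp(3)] .
      ultimately have "(a - a') + (g - g') \<in> D0" unfolding D0_def using splus_mem by blast
      moreover have "h - zmul m x = (a - a') + (g - g')" using zg(1) ac(1) xp(5) by (simp add: algebra_simps)
      ultimately have dD0: "h - zmul m x \<in> D0" by simp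
      have "x1 - x \<in> G" using subg_diff[OF Gsg] x1(1) xp(1) GS(2) by blast
      moreover have "zmul m (x1 - x) = h - zmul m x" using x1(2) by (simp add: zmul_diff)
      ultimately have "\<exists>w\<in>G. zmul m w = h - zmul m x" by blast
      then obtain y0 where y0: "y0 \<in> D0" "zmul m y0 = h - zmul m x"
        using D0pure dD0 unfolding pure_in_def by blast
      have "x + y0 \<in> D" using subg_add[OF Dsg xD] y0(1) D0D by blast
      moreover have "zmul m (x + y0) = h" using y0(2) by (simp add: zmul_add)
      ultimately show ?thesis by blast
    qed
    show ?thesis unfolding D_def[symmetric] pure_in_def subgroup_of_def
      using Dsg DG div by blast
  qed

  have "A \<in> famBB G Gs X"
  proof -
    have "A \<inter> Gs n \<in> famB X n" for n using famB_I[of "A \<inter> Gs n" X n, OF subg_Int[OF Asg GS(1)] famB_part[of n]] by simp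
    then show ?thesis using Asg AG pure_part unfolding famBB_def famB'_def subgroup_of_def by blast
  qed
  moreover have "A0 \<union> H \<subseteq> A" using A0A HC CA by blast
  ultimately show ?thesis using qc by blast
qed


theorem lemma3:
  fixes G :: "'a::ab_group_add set"
    and Gs :: "nat \<Rightarrow> 'a set"
    and X :: "nat \<Rightarrow> 'a set"
  assumes "is_subgroup G"
    and "torsion_free G"
    and "Gs 0 = {0}"
    and "\<And>n. Gs n \<subset> Gs (Suc n)"
    and "\<And>n. subgroup_of (Gs n) G"
    and "\<And>n. free_group (Gs n)"
    and "\<And>n. pure_in (Gs n) G"
    and "(\<Union>n. Gs n) = G"
    and "\<And>n. is_basis (X n) (Gs n)"
  shows "G_aleph0_family (famBB G Gs X) G \<and> (\<forall>A\<in>famBB G Gs X. pure_in A G)"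
proof -
  have Gsg: "is_subgroup G" by (rule assms(1))
  have GS1: "\<And>n. is_subgroup (Gs n)" and GS2: "\<And>n. Gs n \<subseteq> G"
    using assms(5) unfolding subgroup_of_def by auto
  have mGs: "mono Gs" unfolding mono_iff_le_Suc using assms(4) by blast
  have Gle: "\<And>i j. i \<le> j \<Longrightarrow> Gs i \<subseteq> Gs j" using mGs by (simp add: monoD)
  have Gpure: "\<And>n. pure_in (Gs n) G" by (rule assms(7))
  have genX: "\<And>n. gen (X n) = Gs n" and Xsub: "\<And>n. X n \<subseteq> Gs n"
    using assms(9) unfolding is_basis_def by auto
  have subAll: "\<forall>A\<in>famBB G Gs X. subgroup_of A G" unfolding famBB_def by blast
  have zero: "{0} \<in> famBB G Gs X"
  proof -
    have sg0: "is_subgroup {0::'a}" unfolding is_subgroup_def by simp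
    have "{0} \<inter> Gs n \<in> famB' G Gs X n" for n
    proof -
      have e: "{0} \<inter> Gs n = {0}" using subg_0[OF GS1] by blast
      have "{0::'a} \<subseteq> gen ({0} \<inter> X n)" using subg_0[OF gen_subgroup] by blast
      then have "{0} \<in> famB X n" by (rule famB_I[OF sg0])
      moreover have "pure_in (set_plus_grp {0} (Gs i)) G" for i
      proof -
        have "set_plus_grp {0} (Gs i) = Gs i" by (rule splus_absorb1[OF GS1]) (auto simp: subg_0[OF GS1])
        then show ?thesis using Gpure by simp
      qed
      ultimately show ?thesis unfolding famB'_def e by blast
    qed
    moreover have "subgroup_of {0} G" unfolding subgroup_of_def using sg0 subg_0[OF Gsg] by blast
    ultimately show ?thesis unfolding famBB_def by blast
  qed
  have whole: "G \<in> famBB G Gs X"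
  proof -
    have "G \<inter> Gs n \<in> famB' G Gs X n" for n
    proof -
      have e: "G \<inter> Gs n = Gs n" using GS2 by blast
      have "Gs n \<subseteq> gen (Gs n \<inter> X n)" using genX[of n] Xsub[of n] by (simp add: Int_absorb1)
      then have "Gs n \<in> famB X n" by (rule famB_I[OF GS1])
      moreover have "pure_in (set_plus_grp (Gs n) (Gs i)) G" for i
      proof (cases "n \<le> i")
        case True
        have "set_plus_grp (Gs n) (Gs i) = Gs i"
          by (rule splus_absorb1[OF GS1]) (use Gle[OF True] subg_0[OF GS1] in auto)
        then show ?thesis using Gpure by simp
      next
        case False
        have "set_plus_grp (Gs n) (Gs i) = Gs n"
          by (rule splus_absorb2[OF GS1]) (use Gle[of i n] False subg_0[OF GS1] in auto)
        then show ?thesis using Gpure by simp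
      qed
      ultimately show ?thesis unfolding famB'_def e by blast
    qed
    moreover have "subgroup_of G G" unfolding subgroup_of_def using Gsg by blast
    ultimately show ?thesis unfolding famBB_def by blast
  qed
  have chains: "\<forall>K. K \<subseteq> famBB G Gs X \<longrightarrow> K \<noteq> {} \<longrightarrow> Complete_Partial_Order.chain (\<subseteq>) K \<longrightarrow> \<Union>K \<in> famBB G Gs X"
  proof (intro allI impI)
    fix K assume K: "K \<subseteq> famBB G Gs X" "K \<noteq> {}" "Complete_Partial_Order.chain (\<subseteq>) K"
    have Ksg: "\<forall>A\<in>K. is_subgroup A" and KG: "\<forall>A\<in>K. A \<subseteq> G"
      using K(1) unfolding famBB_def subgroup_of_def by auto
    have KB: "\<And>A n. A \<in> K \<Longrightarrow> A \<inter> Gs n \<in> famB' G Gs X n" using K(1) unfolding famBB_def by blast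
    have Usg: "is_subgroup (\<Union>K)" using subgroup_Union_chain[OF K(3) Ksg K(2)] .
    have "\<Union>K \<inter> Gs n \<in> famB' G Gs X n" for n
    proof -
      have "\<Union>K \<inter> Gs n \<subseteq> gen (\<Union>K \<inter> Gs n \<inter> X n)"
      proof
        fix z assume "z \<in> \<Union>K \<inter> Gs n"
        then obtain A where A: "A \<in> K" "z \<in> A \<inter> Gs n" by blast
        have "A \<inter> Gs n \<in> famB X n" using KB[OF A(1)] unfolding famB'_def by blast
        then have "z \<in> gen (A \<inter> Gs n \<inter> X n)" using famB_D[of "A \<inter> Gs n" X n] A(2) by blast
        moreover have "A \<inter> Gs n \<inter> X n \<subseteq> \<Union>K \<inter> Gs n \<inter> X n" using A(1) by blast
        ultimately show "z \<in> gen (\<Union>K \<inter> Gs n \<inter> X n)"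
          using gen_mono[of "A \<inter> Gs n \<inter> X n" "\<Union>K \<inter> Gs n \<inter> X n"] by blast
      qed
      then have "\<Union>K \<inter> Gs n \<in> famB X n" by (rule famB_I[OF subg_Int[OF Usg GS1]])
      moreover have "pure_in (set_plus_grp (\<Union>K \<inter> Gs n) (Gs i)) G" for i
      proof -
        let ?f = "\<lambda>A. set_plus_grp (A \<inter> Gs n) (Gs i)"
        have eq: "set_plus_grp (\<Union>K \<inter> Gs n) (Gs i) = \<Union>(?f ` K)"
          unfolding set_plus_grp_def by blast
        have ch: "Complete_Partial_Order.chain (\<subseteq>) (?f ` K)"
          by (rule chain_imageI[OF K(3)]) (unfold set_plus_grp_def, blast)
        have "\<forall>B\<in>?f ` K. pure_in B G" using KB unfolding famB'_def by blast
        then show ?thesis unfolding eq using pure_Union_chain[OF ch] K(2) by blast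
      qed
      ultimately show ?thesis unfolding famB'_def by blast
    qed
    moreover have "subgroup_of (\<Union>K) G" unfolding subgroup_of_def using Usg KG by blast
    ultimately show "\<Union>K \<in> famBB G Gs X" unfolding famBB_def by blast
  qed
  have ext: "\<forall>A0\<in>famBB G Gs X. \<forall>H. H \<subseteq> G \<longrightarrow> countable H \<longrightarrow>
        (\<exists>A\<in>famBB G Gs X. A0 \<union> H \<subseteq> A \<and> quotient_countable A A0)"
  proof (intro ballI allI impI)
    fix A0 H assume h: "A0 \<in> famBB G Gs X" "H \<subseteq> G" "countable H"
    show "\<exists>A\<in>famBB G Gs X. A0 \<union> H \<subseteq> A \<and> quotient_countable A A0"
      apply (rule extension[OF Gsg])
      using GS1 GS2 Gle Gpure genX Xsub h by auto
  qed
  have pure: "\<forall>A\<in>famBB G Gs X. pure_in A G"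
  proof
    fix A assume A: "A \<in> famBB G Gs X"
    have AG: "A \<subseteq> G" using A unfolding famBB_def subgroup_of_def by blast
    let ?f = "\<lambda>n. A \<inter> Gs n"
    have "mono ?f" using mGs unfolding mono_def by blast
    then have ch: "Complete_Partial_Order.chain (\<subseteq>) (range ?f)" by (rule chain_range_mono)
    have "pure_in (A \<inter> Gs n) G" for n
    proof -
      have "pure_in (set_plus_grp (A \<inter> Gs n) (Gs 0)) G" using A unfolding famBB_def famB'_def by blast
      moreover have "set_plus_grp (A \<inter> Gs n) (Gs 0) = A \<inter> Gs n"
        unfolding assms(3) by (rule splus_absorb2) (use subg_Int[OF _ GS1] A subg_0 GS1 in \<open>auto simp: famBB_def subgroup_of_def\<close>)
      ultimately show ?thesis by simp
    qed
    then have "pure_in (\<Union>(range ?f)) G" using pure_Union_chain[OF ch] by blast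
    moreover have "\<Union>(range ?f) = A" using AG assms(8) by blast
    ultimately show "pure_in A G" by simp
  qed
  show ?thesis unfolding G_aleph0_family_def using subAll zero whole chains ext pure by blast
qed

end
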